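(* Let $M$ and $N$ be two quasianalytic weight sequences and let $(\omega^M_{j,k})_{j,k\in\mathbb N}$ be numbers as in the representation formula for $M$. Assume $\sup_{k\in\mathbb N_{>0}}n_k^{1/k}=+\infty$ (Roumieu case) resp. $\lim_{k\to+\infty}n_k^{1/k}=+\infty$ (Beurling case). Then there exist $\mathbf F=(F_j)_{j\in\mathbb N}\in\Lambda^1_{\{N\}}$ resp. $\mathbf F\in\Lambda^1_{(N)}$ and $a_0\in(0,1]$ such that $$\limsup_{k\to+\infty}\Big|\sum_{j=0}^{k-1}\omega^M_{j,k}F_ja^j\Big|=+\infty\quad\text{for all }0<a\le a_0.$$
   Context: For a sequence $M=(M_p)_{p\in\mathbb N}$ of positive reals write $m_p:=M_p/p!$ (and $n_p:=N_p/p!$). $M$ is a weight sequence if $1=M_0\le M_1$, $M_p^2\le M_{p-1}M_{p+1}$ for all $p\ge1$, and $\liminf_{p\to\infty}m_p^{1/p}>0$; it is quasianalytic if $\sum_{p\ge1}M_{p-1}/M_p=+\infty$. For $\mathbf b=(b_\alpha)_{\alpha\in\mathbb N^r}\in\mathbb C^{\mathbb N^r}$ and $h>0$ put $|\mathbf b|^N_h:=\sup_{\alpha}|b_\alpha|/(h^{|\alpha|}n_{|\alpha|})$; $\Lambda^r_{\{N\}}:=\{\mathbf b:\exists h>0,\ |\mathbf b|^N_h<\infty\}$ and $\Lambda^r_{(N)}:=\{\mathbf b:\forall h>0,\ |\mathbf b|^N_h<\infty\}$. Representation formula (Thilliez): for every quasianalytic weight sequence $M$ there exist numbers $(\omega^M_{j,k})_{j,k\in\mathbb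 N}$ such that $\lim_{k\to+\infty}\omega^M_{j,k}=1$ for every $j$, and for every germ $f$ at $0\in\mathbb R$ of a smooth function $f$ on some $(-1/k,1/k)$ satisfying: for each compact $K$ there is $h>0$ with $\sup_{j,x\in K}|f^{(j)}(x)|/(h^jM_j)<\infty$, one has $f(x)=\lim_{k}\sum_{j=0}^{k-1}\omega^M_{j,k}\frac{f^{(j)}(0)}{j!}x^j$ for all $x>0$ small enough. *)

theory Defs
  imports "HOL-Analysis.Analysis"
begin

definition normseq :: "(nat \<Rightarrow> real) \<Rightarrow> nat \<Rightarrow> real" where
  "normseq M p = M p / fact p"

definition weight_sequence :: "(nat \<Rightarrow> real) \<Rightarrow> bool" where
  "weight_sequence M \<longleftrightarrow>
     (\<forall>p. M p > 0) \<and> M 0 = 1 \<and> M 0 \<le> M 1 \<and>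
     (\<forall>p\<ge>1. (M p)^2 \<le> M (p - 1) * M (p + 1)) \<and>
     liminf (\<lambda>p. ereal (root p (normseq M p))) > 0"

definition quasianalytic :: "(nat \<Rightarrow> real) \<Rightarrow> bool" where
  "quasianalytic M \<longleftrightarrow> \<not> summable (\<lambda>p. M p / M (Suc p))"

text \<open>The seminorm |b|^N_h (one variable, r = 1), valued in the extended reals.\<close>
definition lambda_seminorm :: "(nat \<Rightarrow> real) \<Rightarrow> real \<Rightarrow> (nat \<Rightarrow> complex) \<Rightarrow> ereal" where
  "lambda_seminorm N h b = (SUP \<alpha>. ereal (cmod (b \<alpha>) / (h ^ \<alpha> * normseq N \<alpha>)))"

definition Lambda_Roumieu :: "(nat \<Rightarrow> real) \<Rightarrow> (nat \<Rightarrow> complex) set" where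
  "Lambda_Roumieu N = {b. \<exists>h>0. lambda_seminorm N h b < \<infinity>}"

definition Lambda_Beurling :: "(nat \<Rightarrow> real) \<Rightarrow> (nat \<Rightarrow> complex) set" where
  "Lambda_Beurling N = {b. \<forall>h>0. lambda_seminorm N h b < \<infinity>}"

definition germ_class :: "(nat \<Rightarrow> real) \<Rightarrow> real \<Rightarrow> (real \<Rightarrow> real) \<Rightarrow> bool" where
  "germ_class M r f \<longleftrightarrow> r > 0 \<and>
     (\<forall>n. (deriv ^^ n) f differentiable_on {-r<..<r}) \<and>
     (\<forall>K. compact K \<and> K \<subseteq> {-r<..<r} \<longrightarrow>
        (\<exists>h>0. \<exists>C. \<forall>j. \<forall>x\<in>K. \<bar>(deriv ^^ j) f x\<bar> / (h ^ j * M j) \<le> C))"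

definition representation_coeffs :: "(nat \<Rightarrow> real) \<Rightarrow> (nat \<Rightarrow> nat \<Rightarrow> real) \<Rightarrow> bool" where
  "representation_coeffs M \<omega> \<longleftrightarrow>
     (\<forall>j. (\<lambda>k. \<omega> j k) \<longlonglongrightarrow> 1) \<and>
     (\<forall>f k. germ_class M (1 / real (Suc k)) f \<longrightarrow>
        (\<exists>\<delta>>0. \<forall>x. 0 < x \<and> x < \<delta> \<longrightarrow>
           (\<lambda>k. \<Sum>j<k. \<omega> j k * ((deriv ^^ j) f 0 / fact j) * x ^ j) \<longlonglongrightarrow> f x))"

end

theory Submission imports Defs begin

lemma limsup_infty_crit:
  fixes u :: "nat \<Rightarrow> ereal"
  assumes "\<And>B N. \<exists>k\<ge>N. ereal B \<le> u k"
  shows "limsup u = \<infinity>"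
proof -
  have h: "(SUP m\<in>{n..}. u m) = \<infinity>" for n
  proof -
    have "\<exists>i\<in>{n..}. x < u i" if xl: "x < \<infinity>" for x
    proof -
      obtain r where r: "x \<le> ereal r"
      proof (cases x)
        case (real r) then show ?thesis using that by auto
      next
        case PInf then show ?thesis using xl by simp
      next
        case MInf then show ?thesis using that[of 0] by simp
      qed
      obtain k where k1: "k \<ge> n" and k2: "ereal (r+1) \<le> u k" using assms by blast
      have "x < ereal (r+1)" using r by (rule order_le_less_trans) simp
      then have xk: "x < u k" using k2 by (rule order_less_le_trans)
      have kn: "k \<in> {n..}" using k1 by (simp only: atLeast_iff)
      show ?thesis using xk kn by (rule bexI[where x = k])
    qed
    then show ?thesis unfolding top_ereal_def[symmetric] SUP_eq_top_iff by blast
  qed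
  show ?thesis unfolding limsup_INF_SUP h by simp
qed

lemma core:
  fixes n :: "nat \<Rightarrow> real" and \<omega> :: "nat \<Rightarrow> nat \<Rightarrow> real"
  assumes npos: "\<And>j. n j > 0"
    and om: "\<And>j. (\<lambda>k. \<omega> j k) \<longlonglongrightarrow> 1"
    and H: "\<And>K B. \<exists>j\<ge>K. j \<ge> 1 \<and> root j (n j) \<ge> B"
  shows "\<exists>F::nat\<Rightarrow>real. (\<forall>h>0. \<exists>C. \<forall>\<alpha>. \<bar>F \<alpha>\<bar> / (h ^ \<alpha> * n \<alpha>) \<le> C) \<and>
     (\<forall>a. 0 < a \<and> a \<le> 1 \<longrightarrow>
        limsup (\<lambda>k. ereal (cmod (\<Sum>j<k. of_real (\<omega> j k) * complex_of_real (F j) * of_real a ^ j))) = \<infinity>)"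
proof -
  have "\<forall>J. \<exists>K. K > J \<and> (\<forall>k\<ge>K. \<forall>j\<le>J. \<omega> j k > 1/2)"
  proof
    fix J
    have "\<forall>j\<in>{..J}. eventually (\<lambda>k. \<omega> j k > 1/2) sequentially"
      by (intro ballI order_tendstoD(1)[OF om]) simp
    then have "eventually (\<lambda>k. \<forall>j\<in>{..J}. \<omega> j k > 1/2) sequentially"
      by (intro eventually_ball_finite) auto
    then obtain K where "\<forall>k\<ge>K. \<forall>j\<le>J. \<omega> j k > 1/2"
      unfolding eventually_sequentially by auto
    then show "\<exists>K. K > J \<and> (\<forall>k\<ge>K. \<forall>j\<le>J. \<omega> j k > 1/2)"
      by (intro exI[of _ "max K (Suc J)"]) auto
  qed
  then obtain kk where kk1: "\<And>J. kk J > J" and kk2: "\<And>J k j. k \<ge> kk J \<Longrightarrow> j \<le> J \<Longrightarrow> \<omega> j k > 1/2"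
    by metis
  have "\<forall>K i. \<exists>j\<ge>K. j \<ge> 1 \<and> root j (n j) \<ge> (real (Suc i))^2" using H by blast
  then obtain g where g: "\<And>K i. g K i \<ge> K" "\<And>K i. g K i \<ge> 1"
     "\<And>K i. root (g K i) (n (g K i)) \<ge> (real (Suc i))^2"
    by metis
  define js where "js = rec_nat (g 0 0) (\<lambda>i j. g (kk j) (Suc i))"
  have js0: "js 0 = g 0 0" and jsS: "\<And>i. js (Suc i) = g (kk (js i)) (Suc i)"
    by (simp_all add: js_def)
  have js1: "js i \<ge> 1" for i by (cases i) (metis js0 g(2), metis jsS g(2))
  have js2: "root (js i) (n (js i)) \<ge> (real (Suc i))^2" for i
    by (cases i) (simp_all only: js0 jsS g)
  have js3: "js (Suc i) \<ge> kk (js i)" for i by (simp add: jsS g)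
  have sm: "strict_mono js"
    unfolding strict_mono_Suc_iff using js3 kk1 by (meson order_less_le_trans)
  have inj: "inj js" using sm strict_mono_imp_inj_on by blast
  have sep: "l \<le> i" if "js l < kk (js i)" for l i
  proof (rule ccontr)
    assume "\<not> l \<le> i"
    then have "js (Suc i) \<le> js l" using sm by (simp add: strict_mono_less_eq)
    then show False using js3[of i] that by linarith
  qed
  define F where "F j = (if j \<in> range js then n j / (real (Suc (inv js j)))^j else 0)" for j
  have Fjs: "F (js i) = n (js i) / (real (Suc i))^(js i)" for i
    unfolding F_def using inj by simp
  have Fnn: "F j \<ge> 0" for j unfolding F_def using npos by (simp add: less_imp_le)
  have nbig: "n (js i) \<ge> ((real (Suc i))^2)^(js i)" for i
  proof -
    have "((real (Suc i))^2)^(js i) \<le> (root (js i) (n (js i)))^(js i)"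
      by (rule power_mono[OF js2]) simp
    also have "\<dots> = n (js i)" using js1[of i] npos[of "js i"] by simp
    finally show ?thesis .
  qed
  have part1: "\<forall>h>0. \<exists>C. \<forall>\<alpha>. \<bar>F \<alpha>\<bar> / (h ^ \<alpha> * n \<alpha>) \<le> C"
  proof (intro allI impI)
    fix h :: real assume h: "h > 0"
    define N0 where "N0 = nat (ceiling (1/h))"
    define C where "C = 1 + (\<Sum>i<N0. (1/(real (Suc i) * h))^(js i))"
    have Cge: "C \<ge> 1" unfolding C_def by (intro add_increasing2 sum_nonneg) (use h in auto)
    show "\<exists>C. \<forall>\<alpha>. \<bar>F \<alpha>\<bar> / (h ^ \<alpha> * n \<alpha>) \<le> C"
    proof (intro exI allI)
      fix \<alpha>
      show "\<bar>F \<alpha>\<bar> / (h ^ \<alpha> * n \<alpha>) \<le> C"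
      proof (cases "\<alpha> \<in> range js")
        case False then show ?thesis using Cge by (simp add: F_def)
      next
        case True
        then obtain i where i: "\<alpha> = js i" by auto
        have "\<bar>F \<alpha>\<bar> / (h ^ \<alpha> * n \<alpha>) = (n (js i) / real (Suc i)^js i) / (h^js i * n (js i))"
          using i Fjs[of i] Fnn[of "js i"] by (metis abs_of_nonneg)
        also have "\<dots> = 1 / (real (Suc i)^js i * h^js i)" using npos[of "js i"] h by (simp add: field_simps)
        also have "\<dots> = (1/(real (Suc i) * h))^(js i)" by (simp add: power_mult_distrib power_one_over)
        finally have eq: "\<bar>F \<alpha>\<bar> / (h ^ \<alpha> * n \<alpha>) = (1/(real (Suc i) * h))^(js i)" .
        show ?thesis
        proof (cases "i < N0")
          case True
          have "(1/(real (Suc i) * h))^(js i) \<le> (\<Sum>i<N0. (1/(real (Suc i) * h))^(js i))"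
            by (rule member_le_sum[where f = "\<lambda>i. (1/(real (Suc i) * h))^(js i)"]) (use True h in auto)
          then show ?thesis unfolding eq C_def by linarith
        next
          case False
          then have "real i \<ge> 1/h" unfolding N0_def by linarith
          then have "real (Suc i) * h \<ge> 1" using h by (simp add: field_simps)
          then have "(1/(real (Suc i) * h))^(js i) \<le> 1"
            by (intro power_le_one) auto
          then show ?thesis unfolding eq using Cge by linarith
        qed
      qed
    qed
  qed
  have part2: "limsup (\<lambda>k. ereal (cmod (\<Sum>j<k. of_real (\<omega> j k) * complex_of_real (F j) * of_real a ^ j))) = \<infinity>"
    if a: "0 < a" "a \<le> 1" for a
  proof (rule limsup_infty_crit)
    fix B :: real and N :: nat
    obtain i where i: "real i \<ge> max (max (2 * B / a) (1 / a)) (real N)" by (meson real_arch_simple)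
    define k where "k = kk (js i)"
    have "k \<ge> N"
    proof -
      have "js i \<ge> i" using sm by (simp add: strict_mono_imp_increasing)
      then show ?thesis unfolding k_def using kk1[of "js i"] i by linarith
    qed
    have sumeq: "(\<Sum>j<k. of_real (\<omega> j k) * complex_of_real (F j) * of_real a ^ j)
       = of_real (\<Sum>j<k. \<omega> j k * F j * a ^ j)" by simp
    have terms: "\<omega> j k * F j * a ^ j \<ge> 0" if "j < k" for j
    proof (cases "j \<in> range js")
      case False then show ?thesis by (simp add: F_def)
    next
      case True
      then obtain l where l: "j = js l" by auto
      then have "l \<le> i" using sep that k_def by auto
      then have "j \<le> js i" using l sm by (simp add: strict_mono_less_eq)
      then have "\<omega> j k > 1/2" using kk2 k_def by auto
      then show ?thesis using Fnn a by simp
    qed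
    have jk: "js i < k" unfolding k_def using kk1 by simp
    have "\<omega> (js i) k * F (js i) * a ^ (js i) \<le> (\<Sum>j<k. \<omega> j k * F j * a ^ j)"
      by (rule member_le_sum[where f = "\<lambda>j. \<omega> j k * F j * a ^ j"]) (use jk terms in auto)
    moreover have "\<omega> (js i) k * F (js i) * a ^ (js i) \<ge> (1/2) * F (js i) * a ^ (js i)"
      using kk2[of "js i" k "js i"] k_def Fnn a by (intro mult_right_mono) auto
    moreover have "F (js i) * a ^ (js i) \<ge> (real (Suc i) * a) ^ (js i)"
    proof -
      have "(real (Suc i))^(js i) = ((real (Suc i))^2)^(js i) / (real (Suc i))^(js i)"
        by (simp add: power2_eq_square power_mult_distrib)
      also have "\<dots> \<le> F (js i)"
        unfolding Fjs by (intro divide_right_mono nbig) auto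
      finally show ?thesis using a by (simp add: power_mult_distrib mult_right_mono)
    qed
    moreover have "(real (Suc i) * a) ^ (js i) \<ge> real (Suc i) * a"
    proof -
      have "real (Suc i) * a \<ge> 1" using i a by (auto simp: field_simps)
      then show ?thesis using power_increasing[of 1 "js i" "real (Suc i) * a"] js1[of i] by simp
    qed
    moreover have "real (Suc i) * a \<ge> 2 * B" using i a by (auto simp: field_simps)
    moreover have "1/2 * F (js i) * a ^ js i = 1/2 * (F (js i) * a ^ js i)" by simp
    ultimately have "B \<le> (\<Sum>j<k. \<omega> j k * F j * a ^ j)" by linarith
    then have "ereal B \<le> ereal (cmod (\<Sum>j<k. of_real (\<omega> j k) * complex_of_real (F j) * of_real a ^ j))"
      unfolding sumeq norm_of_real by simp
    then show "\<exists>k\<ge>N. ereal B \<le> ereal (cmod (\<Sum>j<k. of_real (\<omega> j k) * complex_of_real (F j) * of_real a ^ j))"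
      using \<open>k \<ge> N\<close> by blast
  qed
  show ?thesis using part1 part2 by blast
qed

lemma main_aux:
  fixes N :: "nat \<Rightarrow> real" and \<omega> :: "nat \<Rightarrow> nat \<Rightarrow> real"
  assumes npos: "\<And>j. N j > 0"
    and om: "\<And>j. (\<lambda>k. \<omega> j k) \<longlonglongrightarrow> 1"
    and H: "\<And>K B. \<exists>j\<ge>K. j \<ge> 1 \<and> root j (normseq N j) \<ge> B"
  shows "\<exists>F\<in>Lambda_Beurling N \<inter> Lambda_Roumieu N. \<exists>a0. 0 < a0 \<and> a0 \<le> 1 \<and>
              (\<forall>a. 0 < a \<and> a \<le> a0 \<longrightarrow>
                 limsup (\<lambda>k. ereal (cmod (\<Sum>j<k. of_real (\<omega> j k) * F j * of_real a ^ j))) = \<infinity>)"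
proof -
  have np: "\<And>j. normseq N j > 0" using npos by (simp add: normseq_def)
  from core[OF np om H] obtain Fr where FF: "(\<forall>h>0. \<exists>C. \<forall>\<alpha>. \<bar>Fr \<alpha>\<bar> / (h ^ \<alpha> * normseq N \<alpha>) \<le> C) \<and> (\<forall>a. 0 < a \<and> a \<le> 1 \<longrightarrow>
        limsup (\<lambda>k. ereal (cmod (\<Sum>j<k. of_real (\<omega> j k) * complex_of_real (Fr j) * of_real a ^ j))) = \<infinity>)"
    by (rule exE)
  note F1 = conjunct1[OF FF] and F2 = conjunct2[OF FF]
  define F where "F j = complex_of_real (Fr j)" for j
  have B: "F \<in> Lambda_Beurling N"
    unfolding Lambda_Beurling_def lambda_seminorm_def
  proof (intro CollectI allI impI)
    fix h :: real assume "h > 0"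
    from F1[rule_format, OF this] obtain C where C0: "\<forall>\<alpha>. \<bar>Fr \<alpha>\<bar> / (h ^ \<alpha> * normseq N \<alpha>) \<le> C"
      by (rule exE)
    note C = C0[rule_format]
    have "(SUP \<alpha>. ereal (cmod (F \<alpha>) / (h ^ \<alpha> * normseq N \<alpha>))) \<le> ereal C"
      by (rule SUP_least) (simp add: F_def C)
    then show "(SUP \<alpha>. ereal (cmod (F \<alpha>) / (h ^ \<alpha> * normseq N \<alpha>))) < \<infinity>"
      by (rule order_le_less_trans) simp
  qed
  then have R: "F \<in> Lambda_Roumieu N"
    unfolding Lambda_Beurling_def Lambda_Roumieu_def by (auto intro: exI[of _ 1])
  have F2': "\<forall>a. 0 < a \<and> a \<le> 1 \<longrightarrow>
        limsup (\<lambda>k. ereal (cmod (\<Sum>j<k. of_real (\<omega> j k) * F j * of_real a ^ j))) = \<infinity>"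
    unfolding F_def by (rule F2)
  have FBR: "F \<in> Lambda_Beurling N \<inter> Lambda_Roumieu N" using B R by (rule IntI)
  show ?thesis
    apply (rule bexI[OF _ FBR])
    apply (rule exI[of _ 1])
    using F2' by simp
qed

theorem mainTheorem2:
  fixes M N :: "nat \<Rightarrow> real" and \<omega> :: "nat \<Rightarrow> nat \<Rightarrow> real"
  assumes "weight_sequence M" and "quasianalytic M"
    and "weight_sequence N" and "quasianalytic N"
    and "representation_coeffs M \<omega>"
  shows "((SUP k\<in>{0<..}. ereal (root k (normseq N k))) = \<infinity> \<longrightarrow>
           (\<exists>F\<in>Lambda_Roumieu N. \<exists>a0. 0 < a0 \<and> a0 \<le> 1 \<and>
              (\<forall>a. 0 < a \<and> a \<le> a0 \<longrightarrow>
                 limsup (\<lambda>k. ereal (cmod (\<Sum>j<k. of_real (\<omega> j k) * F j * of_real a ^ j))) = \<infinity>)))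
       \<and> (filterlim (\<lambda>k. root k (normseq N k)) at_top sequentially \<longrightarrow>
           (\<exists>F\<in>Lambda_Beurling N. \<exists>a0. 0 < a0 \<and> a0 \<le> 1 \<and>
              (\<forall>a. 0 < a \<and> a \<le> a0 \<longrightarrow>
                 limsup (\<lambda>k. ereal (cmod (\<Sum>j<k. of_real (\<omega> j k) * F j * of_real a ^ j))) = \<infinity>)))"
proof -
  have npos: "\<And>j. N j > 0" using assms(3) by (simp add: weight_sequence_def)
  have np: "\<And>j. normseq N j > 0" using npos by (simp add: normseq_def)
  have om: "\<And>j. (\<lambda>k. \<omega> j k) \<longlonglongrightarrow> 1" using assms(5) by (simp add: representation_coeffs_def)
  have P1: "(SUP k\<in>{0<..}. ereal (root k (normseq N k))) = \<infinity> \<Longrightarrow>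
      (\<exists>j\<ge>K. j \<ge> 1 \<and> root j (normseq N j) \<ge> B)" for K B
  proof (rule ccontr)
    assume S: "(SUP k\<in>{0<..}. ereal (root k (normseq N k))) = \<infinity>"
      and nt: "\<not> (\<exists>j\<ge>K. j \<ge> 1 \<and> root j (normseq N j) \<ge> B)"
    define C where "C = \<bar>B\<bar> + (\<Sum>j<K. root j (normseq N j))"
    have "(SUP k\<in>{0<..}. ereal (root k (normseq N k))) \<le> ereal C"
    proof (rule SUP_least)
      fix k :: nat assume k: "k \<in> {0<..}"
      have "root k (normseq N k) \<le> C"
      proof (cases "k < K")
        case True
        have "root k (normseq N k) \<le> (\<Sum>j<K. root j (normseq N j))"
          by (rule member_le_sum[where f = "\<lambda>j. root j (normseq N j)"])
             (use True np in \<open>auto intro: real_root_ge_zero less_imp_le\<close>)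
        then show ?thesis unfolding C_def by linarith
      next
        case False
        have kK: "K \<le> k" using False by simp
        have k1: "1 \<le> k" using k by simp
        have "\<not> B \<le> root k (normseq N k)" using nt kK k1 by blast
        then have "root k (normseq N k) < B" by simp
        moreover have "(\<Sum>j<K. root j (normseq N j)) \<ge> 0"
          by (intro sum_nonneg) (use np in \<open>auto intro: real_root_ge_zero less_imp_le\<close>)
        ultimately show ?thesis unfolding C_def by linarith
      qed
      then show "ereal (root k (normseq N k)) \<le> ereal C" by simp
    qed
    then show False using S by simp
  qed
  have P2: "filterlim (\<lambda>k. root k (normseq N k)) at_top sequentially \<Longrightarrow>
      (\<exists>j\<ge>K. j \<ge> 1 \<and> root j (normseq N j) \<ge> B)" for K B
  proof -
    assume "filterlim (\<lambda>k. root k (normseq N k)) at_top sequentially"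
    then have "eventually (\<lambda>k. B \<le> root k (normseq N k)) sequentially"
      by (simp add: filterlim_at_top)
    then obtain L where L: "\<And>k. k \<ge> L \<Longrightarrow> B \<le> root k (normseq N k)"
      unfolding eventually_sequentially by blast
    show ?thesis by (intro exI[of _ "max L (max K 1)"]) (auto intro: L)
  qed
  show ?thesis
  proof (intro conjI impI)
    assume S: "(SUP k\<in>{0<..}. ereal (root k (normseq N k))) = \<infinity>"
    from main_aux[OF npos om P1[OF S]] obtain F where F: "F \<in> Lambda_Beurling N \<inter> Lambda_Roumieu N"
      and Fa: "\<exists>a0. 0 < a0 \<and> a0 \<le> 1 \<and>
              (\<forall>a. 0 < a \<and> a \<le> a0 \<longrightarrow>
                 limsup (\<lambda>k. ereal (cmod (\<Sum>j<k. of_real (\<omega> j k) * F j * of_real a ^ j))) = \<infinity>)"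
      by (rule bexE)
    have FF: "F \<in> Lambda_Roumieu N" using F by (rule IntD2)
    show "\<exists>F\<in>Lambda_Roumieu N. \<exists>a0. 0 < a0 \<and> a0 \<le> 1 \<and>
              (\<forall>a. 0 < a \<and> a \<le> a0 \<longrightarrow>
                 limsup (\<lambda>k. ereal (cmod (\<Sum>j<k. of_real (\<omega> j k) * F j * of_real a ^ j))) = \<infinity>)"
      using Fa FF by (rule bexI[where x = F])
  next
    assume S: "filterlim (\<lambda>k. root k (normseq N k)) at_top sequentially"
    from main_aux[OF npos om P2[OF S]] obtain F where F: "F \<in> Lambda_Beurling N \<inter> Lambda_Roumieu N"
      and Fa: "\<exists>a0. 0 < a0 \<and> a0 \<le> 1 \<and>
              (\<forall>a. 0 < a \<and> a \<le> a0 \<longrightarrow>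
                 limsup (\<lambda>k. ereal (cmod (\<Sum>j<k. of_real (\<omega> j k) * F j * of_real a ^ j))) = \<infinity>)"
      by (rule bexE)
    have FF: "F \<in> Lambda_Beurling N" using F by (rule IntD1)
    show "\<exists>F\<in>Lambda_Beurling N. \<exists>a0. 0 < a0 \<and> a0 \<le> 1 \<and>
              (\<forall>a. 0 < a \<and> a \<le> a0 \<longrightarrow>
                 limsup (\<lambda>k. ereal (cmod (\<Sum>j<k. of_real (\<omega> j k) * F j * of_real a ^ j))) = \<infinity>)"
      using Fa FF by (rule bexI[where x = F])
  qed
qed
end
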